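(* Let $G$ be a group with Property RD with respect to a length function $l$, and let $g_1\in G$ be a torsion element of order $d>1$ such that for every $t$ with $0<t<d$ the conjugacy class $C(g_1^t)$ does not grow polynomially (for every polynomial $P$ there are infinitely many $m$ with $|\{g\in C(g_1^t):l(g)=m\}|>P(m)$). Let $p_1=\frac1d(1+g_1+\dots+g_1^{d-1})$. Then every bounded trace $\tau$ on $C^*_{\mathrm{red}}G$ satisfies $\tau(p_1)=\frac1d\tau(1)$; in particular, $[1]$ and $[p_1]$ cannot be distinguished by traces on $C^*_{\mathrm{red}}G$, i.e. for any two bounded traces $\tau_0,\tau_1$ on $C^*_{\mathrm{red}}G$ the matrix $\begin{pmatrix}\tau_0(1)&\tau_0(p_1)\\ \tau_1(1)&\tau_1(p_1)\end{pmatrix}$ has determinant $0$.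
   Context: A length function on $G$ is $l:G\to\mathbb{Z}_{\ge0}$ with $l(fg)\le l(f)+l(g)$, $l(g^{-1})=l(g)$, $l(e)=0$, and $l^{-1}(S)$ finite for finite $S$. $\|\sum c_g g\|_{H^s}^2=\sum|c_g|^2(1+l(g))^{2s}$. $G$ has Property RD with respect to $l$ if there are constants $C,s$ with $\|x\|_{C^*_{\mathrm{red}}G}\le C\|x\|_{H^s}$ for all $x\in\mathbb{C}G$. $C(g)$ is the conjugacy class of $g$. A trace is a bounded linear functional $\tau$ with $\tau(ab)=\tau(ba)$. *)

theory Defs
  imports Complex_Main "HOL-Algebra.Multiplicative_Group" "HOL-Computational_Algebra.Polynomial"
begin

definition length_function :: "('a, 'b) monoid_scheme \<Rightarrow> ('a \<Rightarrow> nat) \<Rightarrow> bool" where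
  "length_function G l \<longleftrightarrow>
     (\<forall>f\<in>carrier G. \<forall>g\<in>carrier G. l (f \<otimes>\<^bsub>G\<^esub> g) \<le> l f + l g) \<and>
     (\<forall>g\<in>carrier G. l (inv\<^bsub>G\<^esub> g) = l g) \<and>
     l \<one>\<^bsub>G\<^esub> = 0 \<and>
     (\<forall>S::nat set. finite S \<longrightarrow> finite {g \<in> carrier G. l g \<in> S})"

definition supp :: "('a \<Rightarrow> complex) \<Rightarrow> 'a set" where
  "supp x = {g. x g \<noteq> 0}"

definition group_ring :: "('a, 'b) monoid_scheme \<Rightarrow> ('a \<Rightarrow> complex) set" where
  "group_ring G = {x. finite (supp x) \<and> supp x \<subseteq> carrier G}"

definition delta :: "'a \<Rightarrow> 'a \<Rightarrow> complex" where
  "delta h = (\<lambda>g. if g = h then 1 else 0)"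

(* Convolution product in CG (also the left regular representation on finitely
   supported functions in l^2 G):  (x*y)(g) = sum_h x(h) y(h^{-1} g). *)
definition conv :: "('a, 'b) monoid_scheme \<Rightarrow> ('a \<Rightarrow> complex) \<Rightarrow> ('a \<Rightarrow> complex) \<Rightarrow> 'a \<Rightarrow> complex" where
  "conv G x y = (\<lambda>g. if g \<in> carrier G
       then (\<Sum>h\<in>supp x. x h * y (inv\<^bsub>G\<^esub> h \<otimes>\<^bsub>G\<^esub> g)) else 0)"

definition l2_norm_fs :: "('a \<Rightarrow> complex) \<Rightarrow> real" where
  "l2_norm_fs f = sqrt (\<Sum>g\<in>supp f. (cmod (f g))\<^sup>2)"

definition hs_norm :: "('a \<Rightarrow> nat) \<Rightarrow> real \<Rightarrow> ('a \<Rightarrow> complex) \<Rightarrow> real" where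
  "hs_norm l s x = sqrt (\<Sum>g\<in>supp x. (cmod (x g))\<^sup>2 * (1 + real (l g)) powr (2 * s))"

(* Reduced C*-norm: operator norm of left convolution by x on l^2(G),
   computed on the dense subspace of finitely supported functions. *)
definition red_norm :: "('a, 'b) monoid_scheme \<Rightarrow> ('a \<Rightarrow> complex) \<Rightarrow> real" where
  "red_norm G x = (SUP f \<in> {f \<in> group_ring G. l2_norm_fs f \<le> 1}. l2_norm_fs (conv G x f))"

definition property_RD :: "('a, 'b) monoid_scheme \<Rightarrow> ('a \<Rightarrow> nat) \<Rightarrow> bool" where
  "property_RD G l \<longleftrightarrow> (\<exists>C s. \<forall>x\<in>group_ring G. red_norm G x \<le> C * hs_norm l s x)"

(* A bounded trace on C*_red G, described through its (unique, determining)
   restriction to the dense subalgebra CG: linear, bounded w.r.t. the reduced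
   norm, and tracial. *)
definition bounded_trace :: "('a, 'b) monoid_scheme \<Rightarrow> (('a \<Rightarrow> complex) \<Rightarrow> complex) \<Rightarrow> bool" where
  "bounded_trace G \<tau> \<longleftrightarrow>
     (\<forall>x\<in>group_ring G. \<forall>y\<in>group_ring G. \<tau> (\<lambda>g. x g + y g) = \<tau> x + \<tau> y) \<and>
     (\<forall>x\<in>group_ring G. \<forall>c. \<tau> (\<lambda>g. c * x g) = c * \<tau> x) \<and>
     (\<exists>K. \<forall>x\<in>group_ring G. cmod (\<tau> x) \<le> K * red_norm G x) \<and>
     (\<forall>x\<in>group_ring G. \<forall>y\<in>group_ring G. \<tau> (conv G x y) = \<tau> (conv G y x))"

definition conj_class :: "('a, 'b) monoid_scheme \<Rightarrow> 'a \<Rightarrow> 'a set" where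
  "conj_class G h = {g \<otimes>\<^bsub>G\<^esub> h \<otimes>\<^bsub>G\<^esub> inv\<^bsub>G\<^esub> g | g. g \<in> carrier G}"

definition not_poly_growth :: "('a, 'b) monoid_scheme \<Rightarrow> ('a \<Rightarrow> nat) \<Rightarrow> 'a \<Rightarrow> bool" where
  "not_poly_growth G l h \<longleftrightarrow>
     (\<forall>P :: real poly. infinite {m::nat. real (card {g \<in> conj_class G h. l g = m}) > poly P (real m)})"

end

theory Submission imports Defs begin

lemma supp_delta: "supp (delta a) = {a}"
  by (auto simp: supp_def delta_def)

lemma delta_in: "a \<in> carrier G \<Longrightarrow> delta a \<in> group_ring G"
  by (simp add: group_ring_def supp_delta)

lemma conv_delta:
  fixes G (structure)
  assumes "group G" "a \<in> carrier G" "b \<in> carrier G"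
  shows "conv G (delta a) (delta b) = delta (a \<otimes>\<^bsub>G\<^esub> b)"
proof (rule ext)
  fix g
  interpret group G by fact
  show "conv G (delta a) (delta b) g = delta (a \<otimes> b) g"
  proof (cases "g \<in> carrier G")
    case True
    have "(inv a \<otimes> g = b) = (g = a \<otimes> b)"
      using assms True by (metis inv_solve_left)
    then show ?thesis using True by (simp only: conv_def supp_delta if_True) (simp add: delta_def)
  next
    case False
    then show ?thesis using assms by (auto simp: conv_def delta_def)
  qed
qed

lemma trace_conj:
  fixes G (structure)
  assumes "group G" "bounded_trace G \<tau>" "g \<in> carrier G" "h \<in> carrier G"
  shows "\<tau> (delta (g \<otimes>\<^bsub>G\<^esub> h \<otimes>\<^bsub>G\<^esub> inv\<^bsub>G\<^esub> g)) = \<tau> (delta h)"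
proof -
  interpret group G by fact
  have tr: "\<forall>x\<in>group_ring G. \<forall>y\<in>group_ring G. \<tau> (conv G x y) = \<tau> (conv G y x)"
    using assms(2) by (simp add: bounded_trace_def)
  have "\<tau> (delta (g \<otimes> h \<otimes> inv g)) = \<tau> (conv G (delta g) (delta (h \<otimes> inv g)))"
    using assms by (simp add: conv_delta m_assoc)
  also have "\<dots> = \<tau> (conv G (delta (h \<otimes> inv g)) (delta g))"
    using tr assms by (simp add: delta_in)
  also have "\<tau> (conv G (delta (h \<otimes> inv g)) (delta g)) = \<tau> (delta h)"
    using assms by (simp add: conv_delta m_assoc)
  finally show ?thesis .
qed

lemma trace_sum:
  assumes "bounded_trace G \<tau>" "finite I" "\<forall>i\<in>I. f i \<in> group_ring G"
  shows "(\<lambda>g. \<Sum>i\<in>I. f i g) \<in> group_ring G \<and> \<tau> (\<lambda>g. \<Sum>i\<in>I. f i g) = (\<Sum>i\<in>I. \<tau> (f i))"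
  using assms(2,3)
proof (induction I rule: finite_induct)
  case empty
  have z: "(\<lambda>g::'a. 0::complex) \<in> group_ring G" by (simp add: group_ring_def supp_def)
  have "\<forall>x\<in>group_ring G. \<forall>c. \<tau> (\<lambda>g. c * x g) = c * \<tau> x"
    using assms(1) unfolding bounded_trace_def by blast
  from bspec[OF this z] have "\<tau> (\<lambda>g. 0 * (0::complex)) = 0 * \<tau> (\<lambda>g. 0)"
    by (rule spec)
  then show ?case using z by simp
next
  case (insert x F)
  have add: "\<forall>x\<in>group_ring G. \<forall>y\<in>group_ring G. \<tau> (\<lambda>g. x g + y g) = \<tau> x + \<tau> y"
    using assms(1) by (simp add: bounded_trace_def)
  have fx: "f x \<in> group_ring G" using insert by simp
  have IH: "(\<lambda>g. \<Sum>i\<in>F. f i g) \<in> group_ring G" "\<tau> (\<lambda>g. \<Sum>i\<in>F. f i g) = (\<Sum>i\<in>F. \<tau> (f i))"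
    using insert by auto
  have mem: "(\<lambda>g. f x g + (\<Sum>i\<in>F. f i g)) \<in> group_ring G"
  proof -
    have "supp (\<lambda>g. f x g + (\<Sum>i\<in>F. f i g)) \<subseteq> supp (f x) \<union> supp (\<lambda>g. \<Sum>i\<in>F. f i g)"
      by (auto simp: supp_def)
    then show ?thesis using fx IH(1) unfolding group_ring_def by (auto intro: finite_subset)
  qed
  show ?case using insert mem add fx IH by simp
qed

lemma l2_delta: "l2_norm_fs (delta a) = 1"
  unfolding l2_norm_fs_def supp_delta by (simp add: delta_def)

lemma conv_delta_one:
  assumes "group G" "f \<in> group_ring G"
  shows "conv G (delta \<one>\<^bsub>G\<^esub>) f = f"
proof (rule ext)
  fix g
  show "conv G (delta \<one>\<^bsub>G\<^esub>) f g = f g"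
  proof (cases "g \<in> carrier G")
    case True
    then show ?thesis using assms
      by (simp only: conv_def supp_delta if_True) (simp add: delta_def monoid.l_one group.is_monoid monoid.inv_one)
  next
    case False
    then have "f g = 0" using assms(2) by (auto simp: group_ring_def supp_def)
    then show ?thesis using False by (simp add: conv_def)
  qed
qed

lemma red_delta_one:
  assumes "group G"
  shows "red_norm G (delta \<one>\<^bsub>G\<^esub>) \<ge> 1"
proof -
  let ?A = "{f \<in> group_ring G. l2_norm_fs f \<le> 1}"
  have eq: "\<And>f. f \<in> ?A \<Longrightarrow> l2_norm_fs (conv G (delta \<one>\<^bsub>G\<^esub>) f) = l2_norm_fs f"
    using conv_delta_one[OF assms] by simp
  have bdd: "bdd_above ((\<lambda>f. l2_norm_fs (conv G (delta \<one>\<^bsub>G\<^esub>) f)) ` ?A)"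
    by (rule bdd_aboveI[where M=1]) (auto simp: eq)
  have one: "delta \<one>\<^bsub>G\<^esub> \<in> ?A"
    using assms by (simp add: delta_in l2_delta monoid.one_closed group.is_monoid)
  have "1 = l2_norm_fs (conv G (delta \<one>\<^bsub>G\<^esub>) (delta \<one>\<^bsub>G\<^esub>))"
    using eq[OF one] by (simp add: l2_delta)
  also have "\<dots> \<le> red_norm G (delta \<one>\<^bsub>G\<^esub>)"
    unfolding red_norm_def by (rule cSUP_upper[OF one bdd])
  finally show ?thesis .
qed

lemma trace_bound:
  assumes "group G" "property_RD G l" "bounded_trace G \<tau>"
  shows "\<exists>B s. \<forall>x\<in>group_ring G. cmod (\<tau> x) \<le> B * hs_norm l s x"
proof -
  obtain C s where C: "\<forall>x\<in>group_ring G. red_norm G x \<le> C * hs_norm l s x"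
    using assms(2) by (auto simp: property_RD_def)
  obtain K where K: "\<forall>x\<in>group_ring G. cmod (\<tau> x) \<le> K * red_norm G x"
    using assms(3) by (auto simp: bounded_trace_def)
  have "0 \<le> K * red_norm G (delta \<one>\<^bsub>G\<^esub>)"
    using K assms(1) by (meson delta_in monoid.one_closed group.is_monoid norm_ge_zero order_trans)
  moreover have "red_norm G (delta \<one>\<^bsub>G\<^esub>) \<ge> 1" by (rule red_delta_one[OF assms(1)])
  ultimately have K0: "K \<ge> 0"
    by (auto simp: zero_le_mult_iff)
  have "\<forall>x\<in>group_ring G. cmod (\<tau> x) \<le> (K * C) * hs_norm l s x"
  proof
    fix x assume x: "x \<in> group_ring G"
    have "cmod (\<tau> x) \<le> K * red_norm G x" using K x by blast
    also have "\<dots> \<le> K * (C * hs_norm l s x)" using C x K0 by (simp add: mult_left_mono)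
    finally show "cmod (\<tau> x) \<le> (K * C) * hs_norm l s x" by (simp add: mult.assoc)
  qed
  then show ?thesis by blast
qed

lemma trace_vanish:
  fixes G (structure)
  assumes grp: "group G" and lf: "length_function G l" and rd: "property_RD G l"
    and tr: "bounded_trace G \<tau>" and h: "h \<in> carrier G" and npg: "not_poly_growth G l h"
  shows "\<tau> (delta h) = 0"
proof (rule ccontr)
  assume ne: "\<tau> (delta h) \<noteq> 0"
  interpret group G by (rule grp)
  obtain B s where B: "\<forall>x\<in>group_ring G. cmod (\<tau> x) \<le> B * hs_norm l s x"
    using trace_bound[OF grp rd tr] by blast
  define tt where "tt = cmod (\<tau> (delta h))"
  have tt0: "tt > 0" using ne by (simp add: tt_def)
  define N where "N m = card {g \<in> conj_class G h. l g = m}" for m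
  define n where "n = nat \<lceil>2*s\<rceil>"
  define c where "c = B^2 / tt^2"
  define P where "P = smult c ([:1,1:]^n)"
  have cc_sub: "conj_class G h \<subseteq> carrier G"
    using h by (auto simp: conj_class_def)
  have key: "real (N m) \<le> poly P (real m)" for m
  proof -
    define Cm where "Cm = {g \<in> conj_class G h. l g = m}"
    have "finite {g \<in> carrier G. l g \<in> {m}}"
      using lf unfolding length_function_def by blast
    moreover have "Cm \<subseteq> {g \<in> carrier G. l g \<in> {m}}" using cc_sub by (auto simp: Cm_def)
    ultimately have fin: "finite Cm" by (rule finite_subset[rotated])
    have Cm_car: "Cm \<subseteq> carrier G" using cc_sub by (auto simp: Cm_def)
    define x where "x = (\<lambda>g. \<Sum>k\<in>Cm. delta k g)"
    have ts: "x \<in> group_ring G \<and> \<tau> x = (\<Sum>k\<in>Cm. \<tau> (delta k))"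
      unfolding x_def using trace_sum[OF tr fin, of delta] Cm_car delta_in by (meson subsetD)
    have "\<tau> (delta k) = \<tau> (delta h)" if "k \<in> Cm" for k
    proof -
      from that obtain g where g: "g \<in> carrier G" "k = g \<otimes> h \<otimes> inv g"
        by (auto simp: Cm_def conj_class_def)
      then show ?thesis using trace_conj[OF grp tr g(1) h] by simp
    qed
    then have tx: "\<tau> x = of_nat (N m) * \<tau> (delta h)"
      using ts by (simp add: N_def Cm_def[symmetric])
    have xeq: "x = (\<lambda>g. if g \<in> Cm then 1 else 0)"
      unfolding x_def delta_def by (rule ext) (simp add: sum.delta'[OF fin])
    have suppx: "supp x = Cm" by (auto simp: xeq supp_def)
    define a where "a = (1 + real m) powr (2 * s)"
    have a0: "a \<ge> 0" by (simp add: a_def)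
    have hs: "hs_norm l s x = sqrt (real (N m) * a)"
      unfolding hs_norm_def suppx by (simp add: xeq a_def Cm_def N_def)
    have ineq: "real (N m) * tt \<le> B * sqrt (real (N m) * a)"
    proof -
      have "cmod (\<tau> x) \<le> B * hs_norm l s x" using B ts by blast
      then show ?thesis using tx hs by (simp add: tt_def norm_mult)
    qed
    have an: "a \<le> (1 + real m) ^ n"
    proof -
      have "a \<le> (1 + real m) powr (real n)"
        unfolding a_def by (rule powr_mono) (auto simp: n_def real_nat_ceiling_ge)
      also have "\<dots> = (1 + real m) ^ n" by (simp add: powr_realpow)
      finally show ?thesis .
    qed
    have polyP: "poly P (real m) = c * (1 + real m) ^ n"
      by (simp add: P_def poly_power add.commute)
    show ?thesis
    proof (cases "N m = 0")
      case True
      then show ?thesis by (simp add: polyP c_def)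
    next
      case False
      have "(real (N m) * tt)^2 \<le> (B * sqrt (real (N m) * a))^2"
        using ineq tt0 by (intro power_mono) auto
      also have "\<dots> = B^2 * (real (N m) * a)" using a0 by (simp add: power_mult_distrib)
      finally have "real (N m) * (real (N m) * tt^2) \<le> real (N m) * (B^2 * a)"
        by (simp add: power_mult_distrib power2_eq_square mult_ac)
      then have "real (N m) * tt^2 \<le> B^2 * a" using False by simp
      then have "real (N m) \<le> c * a" using tt0 by (simp add: c_def field_simps)
      also have "\<dots> \<le> c * (1 + real m) ^ n" using an unfolding c_def by (intro mult_left_mono) auto
      finally show ?thesis by (simp add: polyP)
    qed
  qed
  have "infinite {m::nat. real (card {g \<in> conj_class G h. l g = m}) > poly P (real m)}"
    using npg unfolding not_poly_growth_def by blast
  moreover have "{m::nat. real (card {g \<in> conj_class G h. l g = m}) > poly P (real m)} = {}"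
    using key unfolding N_def by (simp add: not_less)
  ultimately show False by simp
qed

theorem mainTheorem6:
  fixes G :: "('a, 'b) monoid_scheme" and l :: "'a \<Rightarrow> nat" and g1 :: 'a and d :: nat
  assumes "group G"
    and "length_function G l"
    and "property_RD G l"
    and "g1 \<in> carrier G"
    and "group.ord G g1 = d" and "d > 1"
    and "\<forall>t. 0 < t \<and> t < d \<longrightarrow> not_poly_growth G l (g1 [^]\<^bsub>G\<^esub> t)"
  defines "p1 \<equiv> (\<lambda>g. (1 / of_nat d) * (\<Sum>t<d. delta (g1 [^]\<^bsub>G\<^esub> t) g))"
  shows "(\<forall>\<tau>. bounded_trace G \<tau> \<longrightarrow> \<tau> p1 = \<tau> (delta \<one>\<^bsub>G\<^esub>) / of_nat d) \<and>
         (\<forall>\<tau>0 \<tau>1. bounded_trace G \<tau>0 \<and> bounded_trace G \<tau>1 \<longrightarrow>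
            \<tau>0 (delta \<one>\<^bsub>G\<^esub>) * \<tau>1 p1 - \<tau>0 p1 * \<tau>1 (delta \<one>\<^bsub>G\<^esub>) = 0)"
proof -
  interpret grp: group G by fact
  have main: "\<tau> p1 = \<tau> (delta \<one>\<^bsub>G\<^esub>) / of_nat d" if tr: "bounded_trace G \<tau>" for \<tau>
  proof -
    obtain n where dn: "d = Suc n" using assms(6) by (cases d) auto
    have mem: "\<forall>t\<in>{..<d}. delta (g1 [^]\<^bsub>G\<^esub> t) \<in> group_ring G"
      using assms(4) by (simp add: delta_in)
    define S where "S = (\<lambda>g. \<Sum>t<d. delta (g1 [^]\<^bsub>G\<^esub> t) g)"
    have ts: "S \<in> group_ring G \<and> \<tau> S = (\<Sum>t<d. \<tau> (delta (g1 [^]\<^bsub>G\<^esub> t)))"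
      unfolding S_def by (rule trace_sum[OF tr finite_lessThan mem])
    have "\<forall>x\<in>group_ring G. \<forall>c. \<tau> (\<lambda>g. c * x g) = c * \<tau> x"
      using tr unfolding bounded_trace_def by blast
    from spec[OF bspec[OF this conjunct1[OF ts]], of "1 / of_nat d"]
    have "\<tau> p1 = (1 / of_nat d) * \<tau> S" unfolding p1_def S_def by simp
    also have "\<tau> S = \<tau> (delta (g1 [^]\<^bsub>G\<^esub> (0::nat))) + (\<Sum>t<n. \<tau> (delta (g1 [^]\<^bsub>G\<^esub> Suc t)))"
      using ts dn by (simp add: sum.lessThan_Suc_shift del: sum.lessThan_Suc)
    also have "(\<Sum>t<n. \<tau> (delta (g1 [^]\<^bsub>G\<^esub> Suc t))) = 0"
    proof (rule sum.neutral, rule ballI)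
      fix t assume "t \<in> {..<n}"
      then have "0 < Suc t \<and> Suc t < d" using dn by simp
      then have "not_poly_growth G l (g1 [^]\<^bsub>G\<^esub> Suc t)" using assms(7) by blast
      then show "\<tau> (delta (g1 [^]\<^bsub>G\<^esub> Suc t)) = 0"
        using trace_vanish[OF assms(1,2,3) tr] assms(4) by simp
    qed
    finally show ?thesis by simp
  qed
  show ?thesis
  proof (intro conjI allI impI)
    fix \<tau> assume "bounded_trace G \<tau>" then show "\<tau> p1 = \<tau> (delta \<one>\<^bsub>G\<^esub>) / of_nat d" by (rule main)
  next
    fix \<tau>0 \<tau>1 assume "bounded_trace G \<tau>0 \<and> bounded_trace G \<tau>1"
    then have "\<tau>0 p1 = \<tau>0 (delta \<one>\<^bsub>G\<^esub>) / of_nat d" "\<tau>1 p1 = \<tau>1 (delta \<one>\<^bsub>G\<^esub>) / of_nat d"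
      using main by auto
    then show "\<tau>0 (delta \<one>\<^bsub>G\<^esub>) * \<tau>1 p1 - \<tau>0 p1 * \<tau>1 (delta \<one>\<^bsub>G\<^esub>) = 0"
      by simp
  qed
qed

end
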